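(* For a monoid $M$, the following statements are equivalent. (a) $M$ can be embedded into a free commutative monoid of finite rank. (b) $M$ has finite rank and can be embedded into a free commutative monoid (of possibly infinite rank). (c) There exists $d\in\mathbb{N}$ such that $M$ is isomorphic to a submonoid of $(\mathbb{N}^d,+)$ of rank $d$ (a maximal-rank submonoid).
   Context: Convention: all monoids are commutative, cancellative, and reduced (the identity $0$ is the only invertible element), and are written additively. $\mathrm{gp}(M)$ denotes the Grothendieck group of $M$, and the rank of $M$, $\mathrm{rank}(M)$, is the rank of the $\mathbb{Z}$-module $\mathrm{gp}(M)$ (i.e. $\dim_\mathbb{Q}\mathbb{Q}\otimes_\mathbb{Z}\mathrm{gp}(M)$). $\mathbb{N}=\{0,1,2,\dots\}$. *)

theory Defs
  imports Main "HOL-Library.Function_Algebras"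
begin

text \<open>Monoids are modelled as carrier sets inside an ambient commutative cancellative
  additive monoid type; they are submonoids that are reduced.\<close>

definition is_monoid :: "'a::cancel_comm_monoid_add set \<Rightarrow> bool" where
  "is_monoid M \<longleftrightarrow> 0 \<in> M \<and> (\<forall>x\<in>M. \<forall>y\<in>M. x + y \<in> M)
     \<and> (\<forall>x\<in>M. \<forall>y\<in>M. x + y = 0 \<longrightarrow> x = 0)"

fun nsm :: "nat \<Rightarrow> 'a::monoid_add \<Rightarrow> 'a" where
  "nsm 0 a = 0"
| "nsm (Suc k) a = a + nsm k a"

text \<open>Elements of gp(M) are differences a - b with a, b in M, represented by pairs (a,b).
  A list of such elements is Z-linearly independent in gp(M) iff every integer relation
  sum_i (p_i - q_i)(a_i - b_i) = 0 (p_i, q_i natural), i.e. the equality below in M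
  (M is cancellative), forces p_i = q_i for all i.\<close>
definition gp_indep :: "'a::cancel_comm_monoid_add set \<Rightarrow> ('a \<times> 'a) list \<Rightarrow> bool" where
  "gp_indep M xs \<longleftrightarrow> set xs \<subseteq> M \<times> M \<and>
     (\<forall>p q :: nat \<Rightarrow> nat.
        (\<Sum>i<length xs. nsm (p i) (fst (xs!i)) + nsm (q i) (snd (xs!i)))
          = (\<Sum>i<length xs. nsm (p i) (snd (xs!i)) + nsm (q i) (fst (xs!i)))
        \<longrightarrow> (\<forall>i<length xs. p i = q i))"

definition has_rank :: "'a::cancel_comm_monoid_add set \<Rightarrow> nat \<Rightarrow> bool" where
  "has_rank M d \<longleftrightarrow> (\<exists>xs. gp_indep M xs \<and> length xs = d)
                    \<and> (\<forall>xs. gp_indep M xs \<longrightarrow> length xs \<le> d)"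

definition finite_rank :: "'a::cancel_comm_monoid_add set \<Rightarrow> bool" where
  "finite_rank M \<longleftrightarrow> (\<exists>d. has_rank M d)"

definition mon_hom_on :: "'a::cancel_comm_monoid_add set \<Rightarrow> ('a \<Rightarrow> 'b::cancel_comm_monoid_add) \<Rightarrow> bool" where
  "mon_hom_on M f \<longleftrightarrow> f 0 = 0 \<and> (\<forall>x\<in>M. \<forall>y\<in>M. f (x + y) = f x + f y)"

definition free_cmon :: "'i set \<Rightarrow> ('i \<Rightarrow> nat) set" where
  "free_cmon I = {v. finite {i. v i \<noteq> 0} \<and> (\<forall>i. i \<notin> I \<longrightarrow> v i = 0)}"

definition embeds_into_free :: "'a::cancel_comm_monoid_add set \<Rightarrow> 'i set \<Rightarrow> bool" where
  "embeds_into_free M I \<longleftrightarrow>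
     (\<exists>f. mon_hom_on M f \<and> inj_on f M \<and> f ` M \<subseteq> free_cmon I)"

definition Nd :: "nat \<Rightarrow> (nat \<Rightarrow> nat) set" where
  "Nd d = {v. \<forall>i\<ge>d. v i = 0}"

definition isomorphic_mon :: "'a::cancel_comm_monoid_add set \<Rightarrow> 'b::cancel_comm_monoid_add set \<Rightarrow> bool" where
  "isomorphic_mon M S \<longleftrightarrow> (\<exists>g. mon_hom_on M g \<and> bij_betw g M S)"

end

theory Submission imports Defs "HOL-Library.FuncSet" begin


lemma sum_fun_apply: "(sum g A) t = (\<Sum>i\<in>A. (g i) t)"
  for g :: "'b \<Rightarrow> 'i \<Rightarrow> nat"
  by (induction A rule: infinite_finite_induct) auto

lemma nsm_fun: "nsm c (v :: 'i \<Rightarrow> nat) = (\<lambda>t. c * v t)"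
  by (induction c) auto

lemma nsm_in: "is_monoid M \<Longrightarrow> a \<in> M \<Longrightarrow> nsm n a \<in> M"
  by (induction n) (auto simp: is_monoid_def)

lemma sum_in: "is_monoid M \<Longrightarrow> (\<And>i. i \<in> A \<Longrightarrow> g i \<in> M) \<Longrightarrow> sum g A \<in> M"
  by (induction A rule: infinite_finite_induct) (auto simp: is_monoid_def)

lemma hom_nsm: "is_monoid M \<Longrightarrow> mon_hom_on M f \<Longrightarrow> a \<in> M \<Longrightarrow> f (nsm n a) = nsm n (f a)"
  by (induction n) (auto simp: mon_hom_on_def nsm_in)

lemma hom_sum: "is_monoid M \<Longrightarrow> mon_hom_on M f \<Longrightarrow> (\<And>i. i \<in> A \<Longrightarrow> g i \<in> M)
   \<Longrightarrow> f (sum g A) = (\<Sum>i\<in>A. f (g i))"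
  by (induction A rule: infinite_finite_induct) (auto simp: mon_hom_on_def sum_in)

lemma hom_term:
  assumes "is_monoid M" "mon_hom_on M f" "xs!i \<in> M \<times> M"
  shows "f (nsm (p i) (fst (xs!i)) + nsm (q i) (snd (xs!i)))
       = nsm (p i) (f (fst (xs!i))) + nsm (q i) (f (snd (xs!i)))"
  using assms by (auto simp: mon_hom_on_def hom_nsm nsm_in mem_Times_iff)

lemma indep_transfer:
  assumes M: "is_monoid M" and h: "mon_hom_on M f" and inj: "inj_on f M"
    and xs: "set xs \<subseteq> M \<times> M"
  shows "gp_indep (f ` M) (map (map_prod f f) xs) \<longleftrightarrow> gp_indep M xs"
proof -
  have mem: "\<And>i. i < length xs \<Longrightarrow> xs!i \<in> M \<times> M" using xs by auto
  have key: "\<And>p q. ((\<Sum>i<length xs. nsm (p i) (f (fst (xs!i))) + nsm (q i) (f (snd (xs!i))))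
          = (\<Sum>i<length xs. nsm (p i) (f (snd (xs!i))) + nsm (q i) (f (fst (xs!i)))))
      \<longleftrightarrow> ((\<Sum>i<length xs. nsm (p i) (fst (xs!i)) + nsm (q i) (snd (xs!i)))
          = (\<Sum>i<length xs. nsm (p i) (snd (xs!i)) + nsm (q i) (fst (xs!i))))"
  proof -
    fix p q
    let ?L = "(\<Sum>i<length xs. nsm (p i) (fst (xs!i)) + nsm (q i) (snd (xs!i)))"
    let ?R = "(\<Sum>i<length xs. nsm (p i) (snd (xs!i)) + nsm (q i) (fst (xs!i)))"
    have tin: "\<And>i. i < length xs \<Longrightarrow> nsm (p i) (fst (xs!i)) + nsm (q i) (snd (xs!i)) \<in> M"
         "\<And>i. i < length xs \<Longrightarrow> nsm (p i) (snd (xs!i)) + nsm (q i) (fst (xs!i)) \<in> M"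
      using mem M by (auto simp: is_monoid_def nsm_in mem_Times_iff)
    have LM: "?L \<in> M" "?R \<in> M" using tin by (auto intro!: sum_in M)
    have fL: "f ?L = (\<Sum>i<length xs. nsm (p i) (f (fst (xs!i))) + nsm (q i) (f (snd (xs!i))))"
      using hom_sum[OF M h, of "{..<length xs}"] tin mem hom_term[OF M h]
      by (simp add: hom_term[OF M h, of xs])
    have sw: "\<And>i. i < length xs \<Longrightarrow> f (nsm (p i) (snd (xs!i)) + nsm (q i) (fst (xs!i)))
       = nsm (p i) (f (snd (xs!i))) + nsm (q i) (f (fst (xs!i)))"
      using mem M h by (auto simp: mon_hom_on_def hom_nsm nsm_in mem_Times_iff)
    have fR: "f ?R = (\<Sum>i<length xs. nsm (p i) (f (snd (xs!i))) + nsm (q i) (f (fst (xs!i))))"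
      using hom_sum[OF M h, of "{..<length xs}"] tin sw by simp
    show "?thesis p q" using inj_on_eq_iff[OF inj LM] fL fR by simp
  qed
  have set2: "set (map (map_prod f f) xs) \<subseteq> f ` M \<times> f ` M" using xs by auto
  show ?thesis unfolding gp_indep_def using key set2 xs
    by (simp add: case_prod_beta)
qed




lemma pullback_list:
  "set ys \<subseteq> f ` M \<times> f ` M \<Longrightarrow> \<exists>xs. set xs \<subseteq> M \<times> M \<and> ys = map (map_prod f f) xs"
proof (induction ys)
  case Nil then show ?case by auto
next
  case (Cons y ys)
  then obtain xs where xs: "set xs \<subseteq> M \<times> M" "ys = map (map_prod f f) xs" by auto
  from Cons.prems obtain a b where "a \<in> M" "b \<in> M" "y = (f a, f b)" by auto
  then show ?case using xs by (intro exI[of _ "(a,b) # xs"]) auto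
qed

lemma rank_transfer:
  assumes M: "is_monoid M" and h: "mon_hom_on M f" and inj: "inj_on f M"
    and r: "has_rank (f ` M) d"
  shows "has_rank M d"
  unfolding has_rank_def
proof
  obtain ys where ys: "gp_indep (f ` M) ys" "length ys = d" using r by (auto simp: has_rank_def)
  then obtain xs where xs: "set xs \<subseteq> M \<times> M" "ys = map (map_prod f f) xs"
    using pullback_list[of ys f M] by (auto simp: gp_indep_def)
  then show "\<exists>xs. gp_indep M xs \<and> length xs = d"
    using ys indep_transfer[OF M h inj] by auto
next
  show "\<forall>xs. gp_indep M xs \<longrightarrow> length xs \<le> d"
  proof (intro allI impI)
    fix xs assume "gp_indep M xs"
    then have "gp_indep (f ` M) (map (map_prod f f) xs)"
      using indep_transfer[OF M h inj] by (auto simp: gp_indep_def)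
    then show "length xs \<le> d" using r by (auto simp: has_rank_def)
  qed
qed




lemma count_ineq:
  fixes n k B :: nat
  assumes "n > k"
  defines "N \<equiv> (n*B+1)^k"
  shows "(n*N*B+1)^k < (N+1)^n"
proof -
  have N1: "N \<ge> 1" unfolding N_def by simp
  have "n*N*B+1 \<le> (n*B+1)*N" using N1 by (simp add: algebra_simps)
  then have "(n*N*B+1)^k \<le> ((n*B+1)*N)^k" by (rule power_mono) simp
  also have "\<dots> = (n*B+1)^k * N^k" by (rule power_mult_distrib)
  also have "\<dots> = N^(k+1)" by (metis N_def power_Suc Suc_eq_plus1)
  also have "\<dots> \<le> N^n" using N1 assms by (intro power_increasing) auto
  also have "\<dots> < (N+1)^n" using assms by (intro power_strict_mono) auto
  finally show ?thesis .
qed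

lemma term_id:
  fixes p N a b :: nat
  assumes "p \<le> N"
  shows "(p*a + (N-p)*b) + (p*b + q*b) = (p*a + q*b) + N*b"
proof -
  obtain c where "N = p + c" using assms le_Suc_ex by blast
  then show ?thesis by (simp add: algebra_simps)
qed

lemma term_id2:
  fixes p N a b :: nat
  assumes "q \<le> N"
  shows "(q*a + (N-q)*b) + (p*b + q*b) = (p*b + q*a) + N*b"
proof -
  obtain c where "N = q + c" using assms le_Suc_ex by blast
  then show ?thesis by (simp add: algebra_simps)
qed

lemma indep_bound:
  assumes S: "S \<subseteq> Nd k" and ind: "gp_indep S ys"
  shows "length ys \<le> k"
proof (rule ccontr)
  assume "\<not> length ys \<le> k"
  then have nk: "length ys > k" by simp
  define n where "n = length ys"
  define a where "a i = fst (ys!i)" for i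
  define b where "b i = snd (ys!i)" for i
  have inS: "\<And>i. i < n \<Longrightarrow> a i \<in> S \<and> b i \<in> S"
  proof -
    fix i assume i: "i < n"
    have "set ys \<subseteq> S \<times> S" using ind by (simp add: gp_indep_def)
    moreover have "ys!i \<in> set ys" using i n_def by simp
    ultimately have "ys!i \<in> S \<times> S" by blast
    then show "a i \<in> S \<and> b i \<in> S" unfolding a_def b_def by (simp add: mem_Times_iff)
  qed
  have van: "\<And>i t. i < n \<Longrightarrow> t \<ge> k \<Longrightarrow> a i t = 0 \<and> b i t = 0"
    using inS S by (auto simp: Nd_def)
  define B where "B = (\<Sum>i<n. \<Sum>t<k. a i t + b i t)"
  have bnd: "\<And>i t. i < n \<Longrightarrow> t < k \<Longrightarrow> a i t \<le> B \<and> b i t \<le> B"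
  proof -
    fix i t assume it: "i < n" "t < k"
    have "a i t + b i t \<le> (\<Sum>t<k. a i t + b i t)"
      using it by (intro member_le_sum[of t "{..<k}" "\<lambda>t. a i t + b i t"]) auto
    also have "\<dots> \<le> B" unfolding B_def
      using it by (intro member_le_sum[of i "{..<n}" "\<lambda>i. \<Sum>t<k. a i t + b i t"]) auto
    finally show "a i t \<le> B \<and> b i t \<le> B" by simp
  qed
  define N where "N = (n*B+1)^k"
  define w where "w p t = (\<Sum>i<n. p i * a i t + (N - p i) * b i t)" for p :: "nat \<Rightarrow> nat" and t
  define D where "D = PiE {..<n} (\<lambda>_. {..N})"
  define C where "C = PiE {..<k} (\<lambda>_. {..n*N*B})"
  define \<Phi> where "\<Phi> p = restrict (w p) {..<k}" for p
  have wb: "w p t \<le> n*N*B" if "p \<in> D" "t < k" for p t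
  proof -
    have "w p t \<le> (\<Sum>i<n. N*B)" unfolding w_def
    proof (rule sum_mono)
      fix i assume i: "i \<in> {..<n}"
      have pN: "p i \<le> N" using that i by (auto simp: D_def)
      have "p i * a i t + (N - p i) * b i t \<le> p i * B + (N - p i) * B"
        using bnd[of i t] i that by (intro add_mono mult_le_mono2) auto
      also have "\<dots> = N * B" using pN by (metis add_mult_distrib le_add_diff_inverse)
      finally show "p i * a i t + (N - p i) * b i t \<le> N * B" .
    qed
    then show ?thesis by (simp add: mult.assoc)
  qed
  have img: "\<Phi> ` D \<subseteq> C"
  proof
    fix x assume "x \<in> \<Phi> ` D"
    then obtain p where p: "p \<in> D" "x = \<Phi> p" by blast
    have "\<forall>t\<in>{..<k}. w p t \<in> {..n*N*B}" using wb[OF p(1)] by simp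
    then show "x \<in> C" unfolding p(2) \<Phi>_def C_def by (simp only: restrict_PiE_iff)
  qed
  have cD: "card D = (N+1)^n" by (simp add: D_def card_PiE)
  have cC: "card C = (n*N*B+1)^k" by (simp add: C_def card_PiE)
  have "card (\<Phi> ` D) \<le> card C" using img by (intro card_mono) (auto simp: C_def finite_PiE)
  also have "\<dots> < card D" using cC cD count_ineq[OF nk[folded n_def]] N_def by simp
  finally have "\<not> inj_on \<Phi> D" by (rule pigeonhole)
  then obtain p p' where pp: "p \<in> D" "p' \<in> D" "p \<noteq> p'" "\<Phi> p = \<Phi> p'"
    by (auto simp: inj_on_def)
  have weq: "w p t = w p' t" if "t < k" for t
    using pp(4) that unfolding \<Phi>_def by (metis lessThan_iff restrict_apply')
  have rel: "(\<Sum>i<n. nsm (p i) (a i) + nsm (p' i) (b i)) = (\<Sum>i<n. nsm (p i) (b i) + nsm (p' i) (a i))"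
  proof (rule ext)
    fix t
    show "(\<Sum>i<n. nsm (p i) (a i) + nsm (p' i) (b i)) t = (\<Sum>i<n. nsm (p i) (b i) + nsm (p' i) (a i)) t"
    proof (cases "t < k")
      case False
      then show ?thesis using van by (simp add: sum_fun_apply nsm_fun)
    next
      case True
      have pN: "\<And>i. i < n \<Longrightarrow> p i \<le> N \<and> p' i \<le> N" using pp by (auto simp: D_def)
      let ?X = "\<Sum>i<n. p i * b i t + p' i * b i t"
      let ?Nb = "\<Sum>i<n. N * b i t"
      have e1: "w p t + ?X = (\<Sum>i<n. p i * a i t + p' i * b i t) + ?Nb"
        unfolding w_def sum.distrib[symmetric] using pN by (intro sum.cong refl term_id) auto
      have e2: "w p' t + ?X = (\<Sum>i<n. p i * b i t + p' i * a i t) + ?Nb"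
        unfolding w_def sum.distrib[symmetric] using pN
        by (intro sum.cong refl term_id2) auto
      show ?thesis using e1 e2 weq[OF True] by (simp add: sum_fun_apply nsm_fun)
    qed
  qed
  have indep: "\<And>p q. (\<Sum>i<n. nsm (p i) (a i) + nsm (q i) (b i)) = (\<Sum>i<n. nsm (p i) (b i) + nsm (q i) (a i)) \<Longrightarrow> \<forall>i<n. p i = q i"
  proof -
    fix p q assume h: "(\<Sum>i<n. nsm (p i) (a i) + nsm (q i) (b i)) = (\<Sum>i<n. nsm (p i) (b i) + nsm (q i) (a i))"
    have "\<forall>p q. (\<Sum>i<length ys. nsm (p i) (fst (ys!i)) + nsm (q i) (snd (ys!i))) = (\<Sum>i<length ys. nsm (p i) (snd (ys!i)) + nsm (q i) (fst (ys!i))) \<longrightarrow> (\<forall>i<length ys. p i = q i)"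
      using ind unfolding gp_indep_def by (rule conjunct2)
    from this[rule_format, OF h[unfolded a_def b_def n_def]] show "\<forall>i<n. p i = q i" unfolding n_def by blast
  qed
  have "\<forall>i<n. p i = p' i" using indep[OF rel] .
  then have "p = p'" using pp by (intro PiE_ext[of p "{..<n}" "\<lambda>_. {..N}" p']) (auto simp: D_def)
  then show False using pp by simp
qed




lemma cross_cancel:
  fixes p q a b :: nat
  assumes "p*a + q*b = p*b + q*a" "a \<noteq> b"
  shows "p = q"
proof -
  have "int p * int a + int q * int b = int p * int b + int q * int a"
    using assms(1) by (metis of_nat_add of_nat_mult)
  then have "(int p - int q) * (int a - int b) = 0" by (simp add: algebra_simps)
  then show ?thesis using assms(2) by simp
qed

lemma a_to_c:
  fixes d :: nat
  assumes M: "is_monoid M" and e: "embeds_into_free M {..<d}"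
  shows "\<exists>k S. S \<subseteq> Nd k \<and> is_monoid S \<and> has_rank S k \<and> isomorphic_mon M S
     \<and> (\<exists>g. mon_hom_on M g \<and> inj_on g M \<and> S = g ` M)"
proof -
  obtain f where fh: "mon_hom_on M f" and finj: "inj_on f M" and fim: "f ` M \<subseteq> free_cmon {..<d}"
    using e by (auto simp: embeds_into_free_def)
  define P where "P J \<longleftrightarrow> J \<subseteq> {..<d} \<and> (\<forall>x\<in>M. \<forall>y\<in>M. (\<forall>j\<in>J. f x j = f y j) \<longrightarrow> x = y)" for J
  have P0: "P {..<d}" unfolding P_def
  proof (intro conjI ballI impI subset_refl)
    fix x y assume xy: "x \<in> M" "y \<in> M" and ag: "\<forall>j\<in>{..<d}. f x j = f y j"
    have "f x = f y"
    proof
      fix j show "f x j = f y j"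
      proof (cases "j < d")
        case True then show ?thesis using ag by simp
      next
        case False
        have "f x \<in> free_cmon {..<d}" "f y \<in> free_cmon {..<d}" using fim xy by auto
        then show ?thesis using False unfolding free_cmon_def by auto
      qed
    qed
    then show "x = y" by (rule inj_onD[OF finj _ xy])
  qed
  define J where "J = arg_min card P"
  have PJ: "P J" and minJ: "\<And>J'. P J' \<Longrightarrow> card J \<le> card J'"
  proof -
    have "P (arg_min card P) \<and> (\<forall>y. P y \<longrightarrow> card (arg_min card P) \<le> card y)"
      by (rule arg_min_nat_lemma[where P=P, OF P0])
    then show "P J" "\<And>J'. P J' \<Longrightarrow> card J \<le> card J'" unfolding J_def by blast+
  qed
  have Jd: "J \<subseteq> {..<d}" using PJ by (simp add: P_def)
  have finJ: "finite J" by (rule finite_subset[OF Jd finite_lessThan])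
  have wit: "\<forall>j\<in>J. \<exists>x y. x \<in> M \<and> y \<in> M \<and> f x j \<noteq> f y j \<and> (\<forall>j'\<in>J-{j}. f x j' = f y j')"
  proof
    fix j assume j: "j \<in> J"
    have "card (J - {j}) < card J" using j finJ card_gt_0_iff by (metis card_Diff1_less)
    then have "\<not> P (J - {j})" using minJ by (meson not_le)
    moreover have "J - {j} \<subseteq> {..<d}" using PJ by (auto simp: P_def)
    ultimately obtain x y where xy: "x \<in> M" "y \<in> M" "\<forall>j'\<in>J-{j}. f x j' = f y j'" "x \<noteq> y"
      unfolding P_def by blast
    have "f x j \<noteq> f y j"
    proof
      assume "f x j = f y j"
      then have "\<forall>j'\<in>J. f x j' = f y j'" using xy(3) by auto
      then show False using PJ xy unfolding P_def by blast
    qed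
    then show "\<exists>x y. x \<in> M \<and> y \<in> M \<and> f x j \<noteq> f y j \<and> (\<forall>j'\<in>J-{j}. f x j' = f y j')"
      using xy by blast
  qed
  from bchoice[OF wit] obtain X where X: "\<forall>j\<in>J. \<exists>y. X j \<in> M \<and> y \<in> M \<and> f (X j) j \<noteq> f y j \<and> (\<forall>j'\<in>J-{j}. f (X j) j' = f y j')"
    by blast
  from bchoice[OF X] obtain Y where Y: "\<forall>j\<in>J. X j \<in> M \<and> Y j \<in> M \<and> f (X j) j \<noteq> f (Y j) j \<and> (\<forall>j'\<in>J-{j}. f (X j) j' = f (Y j) j')"
    by blast
  have XY: "\<And>j. j \<in> J \<Longrightarrow> X j \<in> M \<and> Y j \<in> M \<and> f (X j) j \<noteq> f (Y j) j
      \<and> (\<forall>j'\<in>J-{j}. f (X j) j' = f (Y j) j')" using Y by blast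
  define k where "k = card J"
  obtain h where h: "bij_betw h {0..<k} J" using ex_bij_betw_nat_finite[OF finJ] k_def by blast
  have hJ: "\<And>i. i < k \<Longrightarrow> h i \<in> J" using h by (auto simp: bij_betw_def)
  have hinj: "\<And>i i'. i < k \<Longrightarrow> i' < k \<Longrightarrow> h i = h i' \<Longrightarrow> i = i'"
    using h by (auto simp: bij_betw_def inj_on_def)
  have hsurj: "\<And>j. j \<in> J \<Longrightarrow> \<exists>i<k. h i = j"
    using h by (auto simp: bij_betw_def image_iff)
  define g where "g m = (\<lambda>i. if i < k then f m (h i) else 0)" for m
  have f0: "f 0 = 0" using fh by (simp add: mon_hom_on_def)
  have gh: "mon_hom_on M g"
    unfolding mon_hom_on_def
  proof (intro conjI ballI)
    show "g 0 = 0" by (rule ext) (simp add: g_def f0)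
    fix x y assume "x \<in> M" "y \<in> M"
    then show "g (x + y) = g x + g y" using fh by (intro ext) (simp add: g_def mon_hom_on_def)
  qed
  have ginj: "inj_on g M"
  proof (rule inj_onI)
    fix x y assume xy: "x \<in> M" "y \<in> M" "g x = g y"
    have "\<forall>j\<in>J. f x j = f y j"
    proof
      fix j assume "j \<in> J"
      then obtain i where "i < k" "h i = j" using hsurj by blast
      then show "f x j = f y j" using fun_cong[OF xy(3), of i] by (simp add: g_def)
    qed
    then show "x = y" using PJ xy unfolding P_def by blast
  qed
  define S where "S = g ` M"
  have SN: "S \<subseteq> Nd k" by (auto simp: S_def Nd_def g_def)
  have SM: "is_monoid S" unfolding is_monoid_def
  proof (intro conjI ballI impI)
    show "0 \<in> S" using M gh unfolding S_def is_monoid_def mon_hom_on_def by (metis image_eqI)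
  next
    fix u v assume "u \<in> S" "v \<in> S"
    then obtain x y where "x \<in> M" "y \<in> M" "u = g x" "v = g y" by (auto simp: S_def)
    then show "u + v \<in> S" using M gh unfolding S_def is_monoid_def mon_hom_on_def
      by (metis image_eqI)
  next
    fix u v :: "nat \<Rightarrow> nat" assume "u + v = 0"
    then show "u = 0" by (auto simp: fun_eq_iff)
  qed
  have iso: "isomorphic_mon M S" unfolding isomorphic_mon_def S_def
    using gh ginj by (auto simp: bij_betw_def)
  define xs where "xs = map (\<lambda>i. (g (X (h i)), g (Y (h i)))) [0..<k]"
  have XYi: "\<And>i. i < k \<Longrightarrow> X (h i) \<in> M \<and> Y (h i) \<in> M" using XY hJ by blast
  have ind: "gp_indep S xs"
    unfolding gp_indep_def
  proof (intro conjI allI impI)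
    show "set xs \<subseteq> S \<times> S" using XYi by (auto simp: xs_def S_def)
  next
    fix p q :: "nat \<Rightarrow> nat" and t
    assume rel: "(\<Sum>i<length xs. nsm (p i) (fst (xs!i)) + nsm (q i) (snd (xs!i)))
          = (\<Sum>i<length xs. nsm (p i) (snd (xs!i)) + nsm (q i) (fst (xs!i)))"
      and t: "t < length xs"
    have tk: "t < k" using t by (simp add: xs_def)
    define A where "A i = g (X (h i)) t" for i
    define Bv where "Bv i = g (Y (h i)) t" for i
    have eq: "(\<Sum>i<k. p i * A i + q i * Bv i) = (\<Sum>i<k. p i * Bv i + q i * A i)"
      using fun_cong[OF rel, of t] by (simp add: xs_def sum_fun_apply nsm_fun A_def Bv_def)
    have oth: "\<And>i. i \<in> {..<k} - {t} \<Longrightarrow> A i = Bv i"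
    proof -
      fix i assume i: "i \<in> {..<k} - {t}"
      then have "h t \<in> J - {h i}" using hJ[OF tk] hinj[of i t] tk by auto
      then show "A i = Bv i" using XY[OF hJ, of i] i tk by (auto simp: A_def Bv_def g_def)
    qed
    have "(\<Sum>i<k. p i * A i + q i * Bv i) = (p t * A t + q t * Bv t) + (\<Sum>i\<in>{..<k}-{t}. p i * A i + q i * Bv i)"
      using tk by (subst sum.remove[of _ t]) auto
    moreover have "(\<Sum>i<k. p i * Bv i + q i * A i) = (p t * Bv t + q t * A t) + (\<Sum>i\<in>{..<k}-{t}. p i * Bv i + q i * A i)"
      using tk by (subst sum.remove[of _ t]) auto
    moreover have "(\<Sum>i\<in>{..<k}-{t}. p i * A i + q i * Bv i) = (\<Sum>i\<in>{..<k}-{t}. p i * Bv i + q i * A i)"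
      using oth by (intro sum.cong) auto
    ultimately have "p t * A t + q t * Bv t = p t * Bv t + q t * A t" using eq by simp
    moreover have "A t \<noteq> Bv t" using XY[OF hJ[OF tk]] tk by (simp add: A_def Bv_def g_def)
    ultimately show "p t = q t" by (rule cross_cancel)
  qed
  have rk: "has_rank S k" unfolding has_rank_def
    using ind indep_bound[OF SN] by (auto simp: xs_def)
  show ?thesis using SN SM rk iso gh ginj S_def by blast
qed




lemma hom_rel_sum:
  assumes M: "is_monoid M" and h: "mon_hom_on M f" and ys: "set ys \<subseteq> M \<times> M" and n: "n \<le> length ys"
  shows "f (\<Sum>i<n. nsm (p i) (fst (ys!i)) + nsm (q i) (snd (ys!i)))
       = (\<Sum>i<n. nsm (p i) (f (fst (ys!i))) + nsm (q i) (f (snd (ys!i))))"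
proof -
  have mem: "\<And>i. i < n \<Longrightarrow> ys!i \<in> M \<times> M" using ys n by (meson nth_mem order_less_le_trans subsetD)
  have tin: "\<And>i. i \<in> {..<n} \<Longrightarrow> nsm (p i) (fst (ys!i)) + nsm (q i) (snd (ys!i)) \<in> M"
    using mem M by (auto simp: is_monoid_def nsm_in mem_Times_iff)
  show ?thesis using hom_sum[OF M h, of "{..<n}", OF tin] mem hom_term[OF M h, of ys] by simp
qed

lemma hom_gen:
  assumes M: "is_monoid M" and h: "mon_hom_on M f" and uv: "\<And>i. i < n \<Longrightarrow> u i \<in> M \<and> v i \<in> M"
  shows "f (\<Sum>i<n. nsm (p i) (u i) + nsm (q i) (v i))
       = (\<Sum>i<n. nsm (p i) (f (u i)) + nsm (q i) (f (v i)))"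
proof -
  have tin: "\<And>i. i \<in> {..<n} \<Longrightarrow> nsm (p i) (u i) + nsm (q i) (v i) \<in> M"
    using uv M by (auto simp: is_monoid_def nsm_in)
  have tf: "\<And>i. i \<in> {..<n} \<Longrightarrow> f (nsm (p i) (u i) + nsm (q i) (v i)) = nsm (p i) (f (u i)) + nsm (q i) (f (v i))"
    using uv M h by (auto simp: mon_hom_on_def hom_nsm nsm_in)
  show ?thesis using hom_sum[OF M h, of "{..<n}", OF tin] tf by simp
qed

lemma fr_to_a:
  fixes M :: "'a::cancel_comm_monoid_add set" and I :: "'i set"
  assumes M: "is_monoid M" and r: "has_rank M r" and e: "embeds_into_free M I"
  shows "\<exists>d::nat. embeds_into_free M {..<d}"
proof -
  obtain f where fh: "mon_hom_on M f" and finj: "inj_on f M" and fim: "f ` M \<subseteq> free_cmon I"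
    using e by (auto simp: embeds_into_free_def)
  obtain xs where xi: "gp_indep M xs" and xl: "length xs = r" using r by (auto simp: has_rank_def)
  have bound: "\<And>ys. gp_indep M ys \<Longrightarrow> length ys \<le> r" using r by (auto simp: has_rank_def)
  have xsS: "set xs \<subseteq> M \<times> M" using xi by (simp add: gp_indep_def)
  have xsM: "\<And>i. i < r \<Longrightarrow> fst (xs!i) \<in> M \<and> snd (xs!i) \<in> M"
  proof -
    fix i assume "i < r"
    then have "xs!i \<in> M \<times> M" using xsS xl nth_mem by blast
    then show "fst (xs!i) \<in> M \<and> snd (xs!i) \<in> M" by (simp add: mem_Times_iff)
  qed
  have fsupp: "\<And>m. m \<in> M \<Longrightarrow> finite {t. f m t \<noteq> 0}" using fim by (auto simp: free_cmon_def)
  define J where "J = (\<Union>i<r. {t. f (fst (xs!i)) t \<noteq> 0} \<union> {t. f (snd (xs!i)) t \<noteq> 0})"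
  have finJ: "finite J" unfolding J_def using fsupp xsM by auto
  have f0: "f 0 = 0" using fh by (simp add: mon_hom_on_def)
  have M0: "0 \<in> M" using M by (simp add: is_monoid_def)
  have supp: "f m t = 0" if m: "m \<in> M" and t: "t \<notin> J" for m t
  proof (rule ccontr)
    assume nz: "f m t \<noteq> 0"
    define ys where "ys = xs @ [(m,0)]"
    have ysS: "set ys \<subseteq> M \<times> M" using xsS m M0 by (auto simp: ys_def)
    have yl: "length ys = Suc r" using xl by (simp add: ys_def)
    have ysi: "\<And>i. i < r \<Longrightarrow> ys!i = xs!i" using xl by (simp add: ys_def nth_append)
    have ysM: "\<And>i. i < Suc r \<Longrightarrow> fst (ys!i) \<in> M \<and> snd (ys!i) \<in> M"
    proof -
      fix i assume "i < Suc r"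
      then have "ys!i \<in> M \<times> M" using ysS yl nth_mem by (metis subsetD)
      then show "fst (ys!i) \<in> M \<and> snd (ys!i) \<in> M" by (simp add: mem_Times_iff)
    qed
    have ysr: "ys!r = (m,0)" using xl by (simp add: ys_def nth_append)
    have "\<not> gp_indep M ys" using bound yl by fastforce
    then have "\<not> (\<forall>p q :: nat \<Rightarrow> nat.
        (\<Sum>i<length ys. nsm (p i) (fst (ys!i)) + nsm (q i) (snd (ys!i)))
          = (\<Sum>i<length ys. nsm (p i) (snd (ys!i)) + nsm (q i) (fst (ys!i)))
        \<longrightarrow> (\<forall>i<length ys. p i = q i))" using ysS unfolding gp_indep_def by blast
    then obtain p q :: "nat \<Rightarrow> nat" where
      rel: "(\<Sum>i<Suc r. nsm (p i) (fst (ys!i)) + nsm (q i) (snd (ys!i)))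
          = (\<Sum>i<Suc r. nsm (p i) (snd (ys!i)) + nsm (q i) (fst (ys!i)))"
      and ne: "\<exists>i<Suc r. p i \<noteq> q i" unfolding yl by blast
    define L0 where "L0 = (\<Sum>i<r. nsm (p i) (fst (xs!i)) + nsm (q i) (snd (xs!i)))"
    define R0 where "R0 = (\<Sum>i<r. nsm (p i) (snd (xs!i)) + nsm (q i) (fst (xs!i)))"
    have rel2: "L0 + (nsm (p r) m + nsm (q r) 0) = R0 + (nsm (p r) 0 + nsm (q r) m)"
    proof -
      have "(\<Sum>i<Suc r. nsm (p i) (fst (ys!i)) + nsm (q i) (snd (ys!i))) = L0 + (nsm (p r) m + nsm (q r) 0)"
        unfolding L0_def sum.lessThan_Suc using ysi ysr by simp
      moreover have "(\<Sum>i<Suc r. nsm (p i) (snd (ys!i)) + nsm (q i) (fst (ys!i))) = R0 + (nsm (p r) 0 + nsm (q r) m)"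
        unfolding R0_def sum.lessThan_Suc using ysi ysr by simp
      ultimately show ?thesis using rel by simp
    qed
    have prq: "p r \<noteq> q r"
    proof
      assume eq: "p r = q r"
      then have "L0 = R0" using rel2 by (simp add: add.commute)
      then have "\<forall>i<r. p i = q i" using xi xl unfolding gp_indep_def L0_def R0_def by blast
      then show False using ne eq less_Suc_eq by auto
    qed
    have "f (\<Sum>i<Suc r. nsm (p i) (fst (ys!i)) + nsm (q i) (snd (ys!i)))
        = f (\<Sum>i<Suc r. nsm (p i) (snd (ys!i)) + nsm (q i) (fst (ys!i)))" using rel by simp
    then have frel: "(\<Sum>i<Suc r. nsm (p i) (f (fst (ys!i))) + nsm (q i) (f (snd (ys!i))))
        = (\<Sum>i<Suc r. nsm (p i) (f (snd (ys!i))) + nsm (q i) (f (fst (ys!i))))"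
      using hom_gen[OF M fh, of "Suc r" "\<lambda>i. fst (ys!i)" "\<lambda>i. snd (ys!i)" p q]
        hom_gen[OF M fh, of "Suc r" "\<lambda>i. snd (ys!i)" "\<lambda>i. fst (ys!i)" p q] ysM
      by simp
    have z: "\<And>i. i < r \<Longrightarrow> f (fst (ys!i)) t = 0 \<and> f (snd (ys!i)) t = 0"
      using t ysi unfolding J_def by auto
    have "(\<Sum>i<Suc r. p i * f (fst (ys!i)) t + q i * f (snd (ys!i)) t)
        = (\<Sum>i<Suc r. p i * f (snd (ys!i)) t + q i * f (fst (ys!i)) t)"
      using fun_cong[OF frel, of t] by (simp add: sum_fun_apply nsm_fun)
    then have "p r * f m t = q r * f m t" using z ysr f0 by (simp add: sum.lessThan_Suc)
    then show False using nz prq by simp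
  qed
  define k where "k = card J"
  obtain h where h: "bij_betw h {0..<k} J" using ex_bij_betw_nat_finite[OF finJ] k_def by blast
  have hJ: "\<And>i. i < k \<Longrightarrow> h i \<in> J" using h by (auto simp: bij_betw_def)
  have hsurj: "\<And>j. j \<in> J \<Longrightarrow> \<exists>i<k. h i = j"
    using h by (auto simp: bij_betw_def image_iff)
  define g where "g m = (\<lambda>i. if i < k then f m (h i) else 0)" for m
  have gh: "mon_hom_on M g"
    unfolding mon_hom_on_def
  proof (intro conjI ballI)
    show "g 0 = 0" by (rule ext) (simp add: g_def f0)
    fix x y assume "x \<in> M" "y \<in> M"
    then show "g (x + y) = g x + g y" using fh by (intro ext) (simp add: g_def mon_hom_on_def)
  qed
  have ginj: "inj_on g M"
  proof (rule inj_onI)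
    fix x y assume xy: "x \<in> M" "y \<in> M" "g x = g y"
    have "f x = f y"
    proof
      fix j show "f x j = f y j"
      proof (cases "j \<in> J")
        case True
        then obtain i where "i < k" "h i = j" using hsurj by blast
        then show ?thesis using fun_cong[OF xy(3), of i] by (simp add: g_def)
      next
        case False then show ?thesis using supp xy by simp
      qed
    qed
    then show "x = y" by (rule inj_onD[OF finj _ xy(1,2)])
  qed
  have gim: "g ` M \<subseteq> free_cmon {..<k}"
  proof
    fix v assume "v \<in> g ` M"
    then obtain m where "v = g m" by blast
    then have "{i. v i \<noteq> 0} \<subseteq> {..<k}" "\<forall>i. i \<notin> {..<k} \<longrightarrow> v i = 0" by (auto simp: g_def)
    then show "v \<in> free_cmon {..<k}" unfolding free_cmon_def using finite_subset by blast
  qed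
  show ?thesis using gh ginj gim unfolding embeds_into_free_def by blast
qed




lemma Nd_free: "Nd d \<subseteq> free_cmon {..<d}"
proof
  fix v assume "v \<in> Nd d"
  then have "{i. v i \<noteq> 0} \<subseteq> {..<d}" "\<forall>i. i \<notin> {..<d} \<longrightarrow> v i = 0"
    by (auto simp: Nd_def not_less[symmetric])
  then show "v \<in> free_cmon {..<d}" unfolding free_cmon_def using finite_subset by blast
qed

lemma part_ac:
  assumes M: "is_monoid M" and a: "\<exists>d::nat. embeds_into_free M {..<d}"
  shows "\<exists>d::nat. \<exists>S. S \<subseteq> Nd d \<and> is_monoid S \<and> has_rank S d \<and> isomorphic_mon M S"
proof -
  from a obtain d :: nat where e: "embeds_into_free M {..<d}" ..
  from a_to_c[OF M e] obtain k S where "S \<subseteq> Nd k \<and> is_monoid S \<and> has_rank S k \<and> isomorphic_mon M S"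
    by blast
  then show ?thesis by (intro exI)
qed

lemma part_ca:
  assumes c: "\<exists>d::nat. \<exists>S. S \<subseteq> Nd d \<and> is_monoid S \<and> has_rank S d \<and> isomorphic_mon M S"
  shows "\<exists>d::nat. embeds_into_free M {..<d}"
proof -
  from c obtain d S g where S: "S \<subseteq> Nd d" and g: "mon_hom_on M g" "bij_betw g M S"
    unfolding isomorphic_mon_def by blast
  have gM: "g ` M = S" "inj_on g M" using g(2) by (auto simp: bij_betw_def)
  have "g ` M \<subseteq> free_cmon {..<d}" using gM S Nd_free by blast
  then have "embeds_into_free M {..<d}" using g(1) gM(2) unfolding embeds_into_free_def by (intro exI[of _ g]) simp
  then show ?thesis by (intro exI)
qed

lemma part_a2:
  assumes M: "is_monoid M" and a: "\<exists>d::nat. embeds_into_free M {..<d}"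
  shows "finite_rank M \<and> embeds_into_free M (UNIV :: nat set)"
proof -
  from a obtain d :: nat where e: "embeds_into_free M {..<d}" ..
  from a_to_c[OF M e] obtain k S where kS: "S \<subseteq> Nd k \<and> is_monoid S \<and> has_rank S k \<and> isomorphic_mon M S
     \<and> (\<exists>g. mon_hom_on M g \<and> inj_on g M \<and> S = g ` M)" by blast
  then obtain g where g: "mon_hom_on M g" "inj_on g M" "S = g ` M" by blast
  have rk: "has_rank (g ` M) k" using kS g(3) by simp
  have "has_rank M k" by (rule rank_transfer[OF M g(1) g(2) rk])
  then have 1: "finite_rank M" unfolding finite_rank_def ..
  obtain f where f: "mon_hom_on M f" "inj_on f M" "f ` M \<subseteq> free_cmon {..<d}"
    using e unfolding embeds_into_free_def by blast
  have "free_cmon {..<d} \<subseteq> free_cmon (UNIV :: nat set)" by (auto simp: free_cmon_def)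
  then have "f ` M \<subseteq> free_cmon (UNIV :: nat set)" using f(3) by (rule order_trans[rotated])
  then have 2: "embeds_into_free M (UNIV :: nat set)" unfolding embeds_into_free_def using f(1,2) by blast
  from 1 2 show ?thesis ..
qed

lemma part_a3:
  fixes I :: "'i set"
  assumes M: "is_monoid M" and fr: "finite_rank M" and e: "embeds_into_free M I"
  shows "\<exists>d::nat. embeds_into_free M {..<d}"
proof -
  from fr obtain r where r: "has_rank M r" unfolding finite_rank_def ..
  show ?thesis using fr_to_a[OF M r e] by assumption
qed

theorem mainTheorem1:
  fixes M :: "'a::cancel_comm_monoid_add set"
  assumes "is_monoid M"
  shows "let
      a = (\<exists>d::nat. embeds_into_free M {..<d});
      c = (\<exists>d::nat. \<exists>S. S \<subseteq> Nd d \<and> is_monoid S \<and> has_rank S d \<and> isomorphic_mon M S)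
    in (a \<longleftrightarrow> c)
       \<and> (a \<longrightarrow> finite_rank M \<and> embeds_into_free M (UNIV :: nat set))
       \<and> (finite_rank M \<and> embeds_into_free M (UNIV :: 'i set) \<longrightarrow> a)"
proof -
  have i1: "(\<exists>d::nat. embeds_into_free M {..<d}) \<longleftrightarrow> (\<exists>d::nat. \<exists>S. S \<subseteq> Nd d \<and> is_monoid S \<and> has_rank S d \<and> isomorphic_mon M S)"
  proof
    assume "\<exists>d::nat. embeds_into_free M {..<d}"
    then show "\<exists>d::nat. \<exists>S. S \<subseteq> Nd d \<and> is_monoid S \<and> has_rank S d \<and> isomorphic_mon M S"
      by (rule part_ac[OF assms])
  next
    assume "\<exists>d::nat. \<exists>S. S \<subseteq> Nd d \<and> is_monoid S \<and> has_rank S d \<and> isomorphic_mon M S"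
    then show "\<exists>d::nat. embeds_into_free M {..<d}" by (rule part_ca)
  qed
  have i2: "(\<exists>d::nat. embeds_into_free M {..<d}) \<longrightarrow> finite_rank M \<and> embeds_into_free M (UNIV :: nat set)"
  proof
    assume "\<exists>d::nat. embeds_into_free M {..<d}"
    then show "finite_rank M \<and> embeds_into_free M (UNIV :: nat set)" by (rule part_a2[OF assms])
  qed
  have i3: "finite_rank M \<and> embeds_into_free M (UNIV :: 'i set) \<longrightarrow> (\<exists>d::nat. embeds_into_free M {..<d})"
  proof
    assume h: "finite_rank M \<and> embeds_into_free M (UNIV :: 'i set)"
    show "\<exists>d::nat. embeds_into_free M {..<d}"
      using part_a3[OF assms conjunct1[OF h] conjunct2[OF h]] by assumption
  qed
  show ?thesis unfolding Let_def using i1 i2 i3 by (intro conjI)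
qed


end
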